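(* Let $f_1,f_2,\dots$ be frog model statistics with values in $[0,\infty]$ and let $f=\sum_{i=1}^\infty f_i$. If all $f_i$ are icv statistics, then $f$ is an icv statistic; if all $f_i$ are pgf statistics, then $f$ is a pgf statistic.
   Context: Frog model: $G$ countable with root $\emptyset$; $(\eta,S)$ consists of counts $\eta(v)\in\{0,1,\dots\}$ for $v\ne\emptyset$ and paths $S_\cdot(v,i)$ with $S_0(v,i)=v$; one active frog starts at $\emptyset$; sleeping frogs activate when an active frog visits their vertex, then follow their paths. $\sigma_{P_\cdot}(\eta,S)$: add an extra frog with path $P_\cdot$ at $P_0$ (nonroot). $\Delta_{P_\cdot}f(\eta,S)=f(\sigma_{P_\cdot}(\eta,S))-f(\eta,S)$. $f$ is an icv statistic if for all $(\eta,S)$ and paths $P^1_\cdot,\dots,P^m_\cdot$ with a common start: (i) for $m=1,2$, $(-1)^m\Delta_{P^1_\cdot}\cdots\Delta_{P^m_\cdot}f(\eta,S)\le0$ whenever all values $f(\sigma_{P^{u_1}_\cdot}\cdots\sigma_{P^{u_j}_\cdot}(\eta,S))$, $\{u_1,\dots,u_j\}\subseteq\{1,\dots,m\}$, are finite; (ii) $f(\eta,S)=\infty\Rightarrow f(\sigma_{P^1_\cdot}(\eta,S))=\infty$; (iii) $f(\sigma_{P^1_\cdot}\sigma_{P^2_\cdot}(\eta,S))=\infty\Rightarrow f(\sigma_{P^i_\cdot}(\eta,S))=\infty$ for $i=1$ or $2$. $f$ is a pgf statistic if (ii),(iii) hold and (i) holds for all $m\ge1$. *)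

theory Defs
  imports "HOL-Library.Extended_Nonnegative_Real" "HOL-Library.Countable"
begin

text \<open>A configuration is a pair (eta, S): eta v is the number of
  sleeping frogs at v, and S v i is the path of the i-th frog at v (0-based index i).\<close>

type_synonym 'v path = "nat \<Rightarrow> 'v"
type_synonym 'v config = "('v \<Rightarrow> nat) \<times> ('v \<Rightarrow> nat \<Rightarrow> 'v path)"

definition valid_config :: "'v \<Rightarrow> 'v config \<Rightarrow> bool" where
  "valid_config rt c \<longleftrightarrow> fst c rt = 0 \<and> (\<forall>v i. snd c v i 0 = v)"

definition add_frog :: "'v path \<Rightarrow> 'v config \<Rightarrow> 'v config" where
  "add_frog P c = (case c of (eta, S) \<Rightarrow>
      (eta(P 0 := Suc (eta (P 0))), S(P 0 := (S (P 0))(eta (P 0) := P))))"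

fun add_frogs :: "'v path list \<Rightarrow> 'v config \<Rightarrow> 'v config" where
  "add_frogs [] c = c"
| "add_frogs (P # Ps) c = add_frogs Ps (add_frog P c)"

fun frog_diff :: "'v path list \<Rightarrow> ('v config \<Rightarrow> real) \<Rightarrow> 'v config \<Rightarrow> real" where
  "frog_diff [] g c = g c"
| "frog_diff (P # Ps) g c = frog_diff Ps g (add_frog P c) - frog_diff Ps g c"

definition diff_cond :: "'v \<Rightarrow> ('v config \<Rightarrow> ennreal) \<Rightarrow> nat \<Rightarrow> bool" where
  "diff_cond rt f m \<longleftrightarrow>
     (\<forall>c Ps. valid_config rt c \<and> length Ps = m
        \<and> (\<forall>P\<in>set Ps. P 0 \<noteq> rt) \<and> (\<forall>P\<in>set Ps. \<forall>Q\<in>set Ps. P 0 = Q 0)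
        \<and> (\<forall>us\<in>set (subseqs Ps). f (add_frogs us c) \<noteq> \<infinity>)
        \<longrightarrow> (-1) ^ m * frog_diff Ps (\<lambda>x. enn2real (f x)) c \<le> 0)"

definition infinity_conds :: "'v \<Rightarrow> ('v config \<Rightarrow> ennreal) \<Rightarrow> bool" where
  "infinity_conds rt f \<longleftrightarrow>
     (\<forall>c P. valid_config rt c \<and> P 0 \<noteq> rt \<and> f c = \<infinity> \<longrightarrow> f (add_frog P c) = \<infinity>)
   \<and> (\<forall>c P Q. valid_config rt c \<and> P 0 \<noteq> rt \<and> Q 0 = P 0
        \<and> f (add_frog P (add_frog Q c)) = \<infinity>
        \<longrightarrow> f (add_frog P c) = \<infinity> \<or> f (add_frog Q c) = \<infinity>)"

definition icv_statistic :: "'v \<Rightarrow> ('v config \<Rightarrow> ennreal) \<Rightarrow> bool" where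
  "icv_statistic rt f \<longleftrightarrow> diff_cond rt f 1 \<and> diff_cond rt f 2 \<and> infinity_conds rt f"

definition pgf_statistic :: "'v \<Rightarrow> ('v config \<Rightarrow> ennreal) \<Rightarrow> bool" where
  "pgf_statistic rt f \<longleftrightarrow> (\<forall>m\<ge>1. diff_cond rt f m) \<and> infinity_conds rt f"

end

theory Submission
  imports Defs
begin

lemma base_sums:
  fixes f :: "nat \<Rightarrow> ennreal"
  assumes "(\<Sum>i. f i) \<noteq> \<infinity>"
  shows "(\<lambda>i. enn2real (f i)) sums enn2real (\<Sum>i. f i)"
proof -
  have lt: "\<And>i. f i < top" using assms ennreal_suminf_lessD[of f top] by (simp add: top_unique less_top)
  hence eq: "\<And>i. f i = ennreal (enn2real (f i))" by simp
  have feq: "(\<lambda>i. ennreal (enn2real (f i))) = f" by (intro ext) (rule eq[symmetric])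
  have ntop: "(\<Sum>i. ennreal (enn2real (f i))) \<noteq> top" using assms unfolding feq by simp
  have "(\<Sum>i. ennreal (enn2real (f i))) = ennreal (\<Sum>i. enn2real (f i))"
    by (rule suminf_ennreal[OF enn2real_nonneg ntop])
  hence "(\<Sum>i. f i) = ennreal (\<Sum>i. enn2real (f i))" unfolding feq .
  moreover have "summable (\<lambda>i. enn2real (f i))" using summable_suminf_not_top ntop by simp
  ultimately show ?thesis by (simp add: summable_sums suminf_nonneg)
qed

lemma fin_back: "x \<noteq> (\<infinity>::ennreal) \<Longrightarrow> ennreal (enn2real x) = x"
  by (simp add: less_top[symmetric])

lemma fin_le: "(x::ennreal) \<le> y \<Longrightarrow> y \<noteq> \<infinity> \<Longrightarrow> x \<noteq> \<infinity>"
  by (auto simp: top_unique)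

lemma term_le:
  fixes fs :: "nat \<Rightarrow> 'a \<Rightarrow> ennreal"
  shows "fs i c \<le> (\<Sum>i. fs i c)"
  using sum_le_suminf[OF summableI, of "{i}" "\<lambda>i. fs i c"] by simp

lemma diff_sums:
  fixes fs :: "nat \<Rightarrow> 'v config \<Rightarrow> ennreal"
  assumes "\<forall>us\<in>set (subseqs Ps). (\<Sum>i. fs i (add_frogs us c)) \<noteq> \<infinity>"
  shows "(\<lambda>i. frog_diff Ps (\<lambda>x. enn2real (fs i x)) c) sums
          frog_diff Ps (\<lambda>x. enn2real (\<Sum>i. fs i x)) c"
  using assms
proof (induction Ps arbitrary: c)
  case Nil
  then show ?case using base_sums[of "\<lambda>i. fs i c"] by simp
next
  case (Cons P Ps)
  have h1: "\<forall>us\<in>set (subseqs Ps). (\<Sum>i. fs i (add_frogs us (add_frog P c))) \<noteq> \<infinity>"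
  proof
    fix us assume "us \<in> set (subseqs Ps)"
    then have "P # us \<in> set (subseqs (P # Ps))" by (simp add: Let_def)
    then show "(\<Sum>i. fs i (add_frogs us (add_frog P c))) \<noteq> \<infinity>"
      using Cons.prems by fastforce
  qed
  have h2: "\<forall>us\<in>set (subseqs Ps). (\<Sum>i. fs i (add_frogs us c)) \<noteq> \<infinity>"
  proof
    fix us assume "us \<in> set (subseqs Ps)"
    then have "us \<in> set (subseqs (P # Ps))" by (simp add: Let_def)
    then show "(\<Sum>i. fs i (add_frogs us c)) \<noteq> \<infinity>"
      using Cons.prems by blast
  qed
  show ?case using sums_diff[OF Cons.IH[OF h1] Cons.IH[OF h2]] by simp
qed

lemma mono1:
  assumes "diff_cond rt f 1" "infinity_conds rt f" "valid_config rt c" "P 0 \<noteq> rt"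
  shows "f c \<le> f (add_frog P c)"
proof (cases "f (add_frog P c) = \<infinity>")
  case True then show ?thesis by simp
next
  case F: False
  then have fc: "f c \<noteq> \<infinity>" using assms(2,3,4) unfolding infinity_conds_def by blast
  have "(-1) ^ 1 * frog_diff [P] (\<lambda>x. enn2real (f x)) c \<le> 0"
    using assms(1) unfolding diff_cond_def
    apply (erule_tac x=c in allE, erule_tac x="[P]" in allE)
    using assms F fc by auto
  then have "enn2real (f c) \<le> enn2real (f (add_frog P c))" by simp
  then have "ennreal (enn2real (f c)) \<le> ennreal (enn2real (f (add_frog P c)))"
    by (rule ennreal_leI)
  then show ?thesis unfolding fin_back[OF F] fin_back[OF fc] .
qed

lemma sub2:
  assumes "diff_cond rt f 2" "infinity_conds rt f" "valid_config rt c" "P 0 \<noteq> rt" "Q 0 = P 0"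
    "f (add_frog P c) \<noteq> \<infinity>" "f (add_frog Q c) \<noteq> \<infinity>" "f c \<noteq> \<infinity>"
  shows "f (add_frog P (add_frog Q c)) \<le> f (add_frog P c) + f (add_frog Q c)"
proof -
  have F: "f (add_frog P (add_frog Q c)) \<noteq> \<infinity>"
    using assms(2-7) unfolding infinity_conds_def by blast
  have "(-1) ^ 2 * frog_diff [Q,P] (\<lambda>x. enn2real (f x)) c \<le> 0"
    using assms(1) unfolding diff_cond_def
    apply (erule_tac x=c in allE, erule_tac x="[Q,P]" in allE)
    using assms F by (auto simp: Let_def)
  then have "enn2real (f (add_frog P (add_frog Q c))) + enn2real (f c)
      \<le> enn2real (f (add_frog P c)) + enn2real (f (add_frog Q c))" by simp
  then have "enn2real (f (add_frog P (add_frog Q c)))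
      \<le> enn2real (f (add_frog P c)) + enn2real (f (add_frog Q c))"
    using enn2real_nonneg[of "f c"] by linarith
  then have "ennreal (enn2real (f (add_frog P (add_frog Q c))))
      \<le> ennreal (enn2real (f (add_frog P c))) + ennreal (enn2real (f (add_frog Q c)))"
    by (metis enn2real_nonneg ennreal_leI ennreal_plus)
  then show ?thesis unfolding fin_back[OF F] fin_back[OF assms(6)] fin_back[OF assms(7)] .
qed

lemma sum_diff_cond:
  fixes rt :: 'v and fs :: "nat \<Rightarrow> 'v config \<Rightarrow> ennreal"
  assumes "\<forall>i. diff_cond rt (fs i) m"
  shows "diff_cond rt (\<lambda>c. \<Sum>i. fs i c) m"
  unfolding diff_cond_def
proof (intro allI impI)
  fix c Ps
  assume A: "valid_config rt c \<and> length Ps = m \<and> (\<forall>P\<in>set Ps. P 0 \<noteq> rt) \<and>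
       (\<forall>P\<in>set Ps. \<forall>Q\<in>set Ps. P 0 = Q 0) \<and>
       (\<forall>us\<in>set (subseqs Ps). (\<Sum>i. fs i (add_frogs us c)) \<noteq> \<infinity>)"
  have S: "(\<lambda>i. (-1)^m * frog_diff Ps (\<lambda>x. enn2real (fs i x)) c) sums
          ((-1)^m * frog_diff Ps (\<lambda>x. enn2real (\<Sum>i. fs i x)) c)"
    using sums_mult[OF diff_sums[of Ps fs c]] A by blast
  have each: "\<And>i. (-1)^m * frog_diff Ps (\<lambda>x. enn2real (fs i x)) c \<le> 0"
  proof -
    fix i
    have "\<forall>us\<in>set (subseqs Ps). fs i (add_frogs us c) \<noteq> \<infinity>"
      using A fin_le[OF term_le[of fs i]] by blast
    then show "(-1)^m * frog_diff Ps (\<lambda>x. enn2real (fs i x)) c \<le> 0"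
      using assms[rule_format, of i] A unfolding diff_cond_def
      by (elim allE[of _ c] allE[of _ Ps]) blast
  qed
  show "(-1)^m * frog_diff Ps (\<lambda>x. enn2real (\<Sum>i. fs i x)) c \<le> 0"
    using sums_le[OF each S sums_zero] by simp
qed

lemma sum_inf:
  fixes rt :: 'v and fs :: "nat \<Rightarrow> 'v config \<Rightarrow> ennreal"
  assumes d1: "\<forall>i. diff_cond rt (fs i) 1" and d2: "\<forall>i. diff_cond rt (fs i) 2"
    and ic: "\<forall>i. infinity_conds rt (fs i)"
  shows "infinity_conds rt (\<lambda>c. \<Sum>i. fs i c)"
  unfolding infinity_conds_def
proof (intro conjI allI impI)
  fix c and P :: "'v path"
  assume A: "valid_config rt c \<and> P 0 \<noteq> rt \<and> (\<Sum>i. fs i c) = \<infinity>"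
  have m: "\<And>i. fs i c \<le> fs i (add_frog P c)"
  proof -
    fix i show "fs i c \<le> fs i (add_frog P c)"
      by (rule mono1) (use d1 ic A in auto)
  qed
  have "(\<Sum>i. fs i c) \<le> (\<Sum>i. fs i (add_frog P c))"
    by (rule suminf_le[OF m summableI summableI])
  then show "(\<Sum>i. fs i (add_frog P c)) = \<infinity>" using A fin_le by blast
next
  fix c and P Q :: "'v path"
  assume A: "valid_config rt c \<and> P 0 \<noteq> rt \<and> Q 0 = P 0 \<and>
       (\<Sum>i. fs i (add_frog P (add_frog Q c))) = \<infinity>"
  show "(\<Sum>i. fs i (add_frog P c)) = \<infinity> \<or> (\<Sum>i. fs i (add_frog Q c)) = \<infinity>"
  proof (rule ccontr)
    assume N: "\<not> ?thesis"
    have N1: "(\<Sum>i. fs i (add_frog P c)) \<noteq> \<infinity>" and N2: "(\<Sum>i. fs i (add_frog Q c)) \<noteq> \<infinity>"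
      using N by auto
    have fP: "\<And>i. fs i (add_frog P c) \<noteq> \<infinity>"
      by (rule fin_le[OF term_le[of fs _ "add_frog P c"] N1])
    have fQ: "\<And>i. fs i (add_frog Q c) \<noteq> \<infinity>"
      by (rule fin_le[OF term_le[of fs _ "add_frog Q c"] N2])
    have fc: "\<And>i. fs i c \<noteq> \<infinity>"
    proof -
      fix i
      have "fs i c \<le> fs i (add_frog P c)"
        by (rule mono1) (use d1 ic A in auto)
      then show "fs i c \<noteq> \<infinity>" using fP fin_le by blast
    qed
    have s: "\<And>i. fs i (add_frog P (add_frog Q c)) \<le> fs i (add_frog P c) + fs i (add_frog Q c)"
    proof -
      fix i show "fs i (add_frog P (add_frog Q c)) \<le> fs i (add_frog P c) + fs i (add_frog Q c)"
        by (rule sub2) (use d2 ic A fP fQ fc in auto)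
    qed
    have "(\<Sum>i. fs i (add_frog P (add_frog Q c))) \<le> (\<Sum>i. fs i (add_frog P c) + fs i (add_frog Q c))"
      by (rule suminf_le[OF s summableI summableI])
    also have "\<dots> = (\<Sum>i. fs i (add_frog P c)) + (\<Sum>i. fs i (add_frog Q c))"
      by (rule suminf_add[symmetric, OF summableI summableI])
    finally have le: "(\<Sum>i. fs i (add_frog P (add_frog Q c))) \<le> (\<Sum>i. fs i (add_frog P c)) + (\<Sum>i. fs i (add_frog Q c))" .
    have "(\<Sum>i. fs i (add_frog P c)) + (\<Sum>i. fs i (add_frog Q c)) \<noteq> \<infinity>"
      using N1 N2 by (simp add: top_unique)
    then have "(\<Sum>i. fs i (add_frog P (add_frog Q c))) \<noteq> \<infinity>" by (rule fin_le[OF le])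
    then show False using A by simp
  qed
qed

theorem lemma20:
  fixes rt :: "'v::countable"
    and fs :: "nat \<Rightarrow> 'v config \<Rightarrow> ennreal"
  shows "((\<forall>i. icv_statistic rt (fs i)) \<longrightarrow> icv_statistic rt (\<lambda>c. \<Sum>i. fs i c))
       \<and> ((\<forall>i. pgf_statistic rt (fs i)) \<longrightarrow> pgf_statistic rt (\<lambda>c. \<Sum>i. fs i c))"
proof (intro conjI impI)
  assume H: "\<forall>i. icv_statistic rt (fs i)"
  have d1: "\<forall>i. diff_cond rt (fs i) 1" and d2: "\<forall>i. diff_cond rt (fs i) 2"
    and ic: "\<forall>i. infinity_conds rt (fs i)"
    using H unfolding icv_statistic_def by simp_all
  show "icv_statistic rt (\<lambda>c. \<Sum>i. fs i c)"
    unfolding icv_statistic_def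
    using sum_diff_cond[OF d1] sum_diff_cond[OF d2] sum_inf[OF d1 d2 ic] by blast
next
  assume H: "\<forall>i. pgf_statistic rt (fs i)"
  have d: "\<And>m. m \<ge> 1 \<Longrightarrow> \<forall>i. diff_cond rt (fs i) m"
    using H unfolding pgf_statistic_def by simp
  have ic: "\<forall>i. infinity_conds rt (fs i)"
    using H unfolding pgf_statistic_def by simp
  have d1: "\<forall>i. diff_cond rt (fs i) 1" by (rule d) simp
  have d2: "\<forall>i. diff_cond rt (fs i) 2" by (rule d) simp
  show "pgf_statistic rt (\<lambda>c. \<Sum>i. fs i c)"
    unfolding pgf_statistic_def
  proof (intro conjI allI impI)
    fix m :: nat assume "m \<ge> 1" then show "diff_cond rt (\<lambda>c. \<Sum>i. fs i c) m"
      by (intro sum_diff_cond d)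
  next
    show "infinity_conds rt (\<lambda>c. \<Sum>i. fs i c)" by (rule sum_inf[OF d1 d2 ic])
  qed
qed

end
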